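(* Let $0<\tau<T$, let $\kappa_3,\kappa_T$ satisfy $0<\kappa_3<\kappa_T<1$, and let $t_3\in(\tau,T)$. Set \[ \lambda^{\star\star}(\kappa_3,\kappa_T,t_3):=\frac{\kappa_T-\kappa_3}{g_*(\kappa_3,\kappa_T)\int_{t_3}^{T}A^+(\xi,T)\,d\xi} \] and let $0<\gamma_3\le(\kappa_T-\kappa_3)/(T-t_3)$. Then for every $\lambda>\lambda^{\star\star}(\kappa_3,\kappa_T,t_3)$, the solution $(x(t),y(t))$ of \[ x'=y,\qquad y'=-\lambda a^+(t)g(x) \] with $x(T)=\kappa_T$, $y(T)=0$ satisfies $x(t_3)<\kappa_3$ and $y(t_3)>\gamma_3$.
   Context: $a\in L^1(\tau,T)$ with positive part $a^+$, and $A^+(t',t''):=\int_{t'}^{t''}a^+(\xi)\,d\xi$; it is assumed that $A^+(t,T)>0$ for all $t\in[\tau,T)$. $g\colon\mathbb{R}\to[0,+\infty)$ is the extension by zero outside $[0,1]$ of a locally Lipschitz continuous function $g\colon[0,1]\to[0,+\infty)$ with $g(0)=g(1)=0$, $g(s)>0$ for $0<s<1$ and $\lim_{s\to0^+}g(s)/s=0$. For $0\le\kappa'<\kappa''\le1$, $g_*(\kappa',\kappa''):=\min_{s\in[\kappa',\kappa'']}g(s)$. Solutions are in the Carathéodory sense on $[\tau,T]$. *)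

theory Defs
  imports "HOL-Analysis.Analysis"
begin

definition pos_part :: "(real \<Rightarrow> real) \<Rightarrow> real \<Rightarrow> real" where
  "pos_part a t = max (a t) 0"

definition Aplus :: "(real \<Rightarrow> real) \<Rightarrow> real \<Rightarrow> real \<Rightarrow> real" where
  "Aplus a t1 t2 = integral {t1..t2} (pos_part a)"

definition gstar :: "(real \<Rightarrow> real) \<Rightarrow> real \<Rightarrow> real \<Rightarrow> real" where
  "gstar g k1 k2 = (INF s\<in>{k1..k2}. g s)"

definition admissible_g :: "(real \<Rightarrow> real) \<Rightarrow> bool" where
  "admissible_g g \<longleftrightarrow>
     (\<forall>s. s \<notin> {0..1} \<longrightarrow> g s = 0) \<and>
     (\<forall>s\<in>{0..1}. \<exists>e>0. \<exists>L. L-lipschitz_on ({s-e..s+e} \<inter> {0..1}) g) \<and>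
     g 0 = 0 \<and> g 1 = 0 \<and>
     (\<forall>s. 0 < s \<and> s < 1 \<longrightarrow> g s > 0) \<and>
     ((\<lambda>s. g s / s) \<longlongrightarrow> 0) (at_right 0)"

text \<open>Caratheodory solution on [tau,T] of x' = y, y' = - lambda a^+(t) g(x),
  written in the equivalent integral form (x, y continuous, hence absolutely
  continuous by the integral identities).\<close>
definition carath_sol ::
  "real \<Rightarrow> (real \<Rightarrow> real) \<Rightarrow> (real \<Rightarrow> real) \<Rightarrow> real \<Rightarrow> real
     \<Rightarrow> (real \<Rightarrow> real) \<Rightarrow> (real \<Rightarrow> real) \<Rightarrow> bool" where
  "carath_sol lam a g tau T x y \<longleftrightarrow>
     continuous_on {tau..T} x \<and> continuous_on {tau..T} y \<and>
     (\<forall>t\<in>{tau..T}. (y has_integral (x T - x t)) {t..T}) \<and>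
     (\<forall>t\<in>{tau..T}. ((\<lambda>s. lam * pos_part a s * g (x s)) has_integral (y t - y T)) {t..T})"

end

theory Submission
  imports Defs
begin

lemma mono_int:
  fixes f :: "real \<Rightarrow> real"
  assumes "(f has_integral I1) {t..T}" "(f has_integral I2) {s..T}" "t \<le> s" "s \<le> T"
    "\<And>u. u \<in> {t..s} \<Longrightarrow> 0 \<le> f u"
  shows "I2 \<le> I1"
proof -
  have fi: "f integrable_on {t..T}" using assms(1) by blast
  have fs: "f integrable_on {t..s}" using integrable_on_subinterval[OF fi] assms(3,4) by auto
  have c: "integral {t..s} f + integral {s..T} f = integral {t..T} f"
    using Henstock_Kurzweil_Integration.integral_combine[OF assms(3,4) fi] .
  have "0 \<le> integral {t..s} f" using Henstock_Kurzweil_Integration.integral_nonneg[OF fs] assms(5) by blast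
  moreover have "integral {s..T} f = I2" "integral {t..T} f = I1" using assms(1,2) integral_unique by auto
  ultimately show ?thesis using c by linarith
qed

lemma g_cont:
  assumes g: "admissible_g g"
  shows "continuous_on {0..1} g"
  unfolding continuous_on_iff
proof (intro ballI allI impI)
  fix s e :: real assume s: "s \<in> {0..1}" and e: "0 < e"
  obtain d L where d: "d > 0" and L: "L-lipschitz_on ({s-d..s+d} \<inter> {0..1}) g"
    using g s unfolding admissible_g_def by blast
  have L0: "0 \<le> L" using L lipschitz_on_nonneg by blast
  define r where "r = min d (e / (L+1))"
  have r: "r > 0" using d e L0 by (simp add: r_def)
  show "\<exists>r>0. \<forall>x'\<in>{0..1}. dist x' s < r \<longrightarrow> dist (g x') (g s) < e"
  proof (intro exI conjI ballI impI, rule r)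
    fix x' :: real assume x': "x' \<in> {0..1}" "dist x' s < r"
    have "x' \<in> {s-d..s+d} \<inter> {0..1}" using x' r_def by (auto simp: dist_real_def)
    moreover have "s \<in> {s-d..s+d} \<inter> {0..1}" using s d by auto
    ultimately have "dist (g x') (g s) \<le> L * dist x' s" using lipschitz_onD[OF L] by blast
    also have "\<dots> \<le> L * r" using x' L0 by (intro mult_left_mono) auto
    also have "\<dots> \<le> L * (e / (L+1))" using L0 by (intro mult_left_mono) (auto simp: r_def)
    also have "\<dots> < e" using L0 e by (simp add: field_simps)
    finally show "dist (g x') (g s) < e" .
  qed
qed

theorem lemma2p5:
  fixes a g x y :: "real \<Rightarrow> real"
    and tau T kappa3 kappaT t3 gamma3 lam :: real
  assumes a_int: "a absolutely_integrable_on {tau..T}"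
    and Apos: "\<forall>t. tau \<le> t \<and> t < T \<longrightarrow> Aplus a t T > 0"
    and g: "admissible_g g"
    and tau: "0 < tau" "tau < T"
    and kappa: "0 < kappa3" "kappa3 < kappaT" "kappaT < 1"
    and t3: "tau < t3" "t3 < T"
    and gamma3: "0 < gamma3" "gamma3 \<le> (kappaT - kappa3) / (T - t3)"
    and lam: "lam > (kappaT - kappa3) /
                (gstar g kappa3 kappaT * integral {t3..T} (\<lambda>\<xi>. Aplus a \<xi> T))"
    and sol: "carath_sol lam a g tau T x y"
    and xT: "x T = kappaT" and yT: "y T = 0"
  shows "x t3 < kappa3 \<and> y t3 > gamma3"
proof -
  define pa where "pa = pos_part a"
  define G where "G = gstar g kappa3 kappaT"
  define Apl where "Apl = (\<lambda>\<xi>. Aplus a \<xi> T)"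
  define I where "I = integral {t3..T} Apl"
  have yint: "\<And>t. t \<in> {tau..T} \<Longrightarrow> (y has_integral (x T - x t)) {t..T}"
    and fint: "\<And>t. t \<in> {tau..T} \<Longrightarrow> ((\<lambda>s. lam * pa s * g (x s)) has_integral (y t - y T)) {t..T}"
    using sol unfolding carath_sol_def pa_def by auto
  have gnn: "\<And>s. 0 \<le> g s"
  proof -
    fix s :: real
    show "0 \<le> g s"
      using g unfolding admissible_g_def
      by (cases "s \<in> {0..1}"; cases "s = 0"; cases "s = 1") (auto, metis less_eq_real_def less_le)
  qed
  have gc: "continuous_on {kappa3..kappaT} g"
    using continuous_on_subset[OF g_cont[OF g]] kappa by auto
  obtain s0 where s0: "s0 \<in> {kappa3..kappaT}" "\<forall>s\<in>{kappa3..kappaT}. g s0 \<le> g s"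
    using continuous_attains_inf[OF compact_Icc _ gc] kappa by auto
  have Geq: "G = g s0"
    unfolding G_def gstar_def
    by (rule antisym, rule cINF_lower, use s0 in \<open>auto intro: bdd_belowI2\<close>, rule cINF_greatest, use s0 in auto)
  have Gpos: "G > 0" using Geq s0 g kappa unfolding admissible_g_def by auto
  have Gle: "\<And>s. s \<in> {kappa3..kappaT} \<Longrightarrow> G \<le> g s" using Geq s0 by auto
  have pann: "\<And>s. 0 \<le> pa s" by (simp add: pa_def pos_part_def)
  have pai: "pa integrable_on {tau..T}"
  proof -
    have "(\<lambda>s. 0::real) absolutely_integrable_on {tau..T}"
      by (simp add: absolutely_integrable_on_def)
    then have "(\<lambda>s. max (a s) 0) absolutely_integrable_on {tau..T}"
      using absolutely_integrable_max_1[OF a_int] by blast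
    then show ?thesis unfolding pa_def pos_part_def[abs_def] using absolutely_integrable_on_def by blast
  qed
  have paisub: "\<And>t u. tau \<le> t \<Longrightarrow> u \<le> T \<Longrightarrow> pa integrable_on {t..u}"
    using integrable_on_subinterval[OF pai] by auto
  have Apl_eq: "\<And>t. Apl t = integral {t..T} pa" by (simp add: Apl_def Aplus_def pa_def)
  have Aplc: "continuous_on {t3..T} Apl"
    unfolding Apl_eq using indefinite_integral_continuous_1'[OF paisub[of t3 T]] t3 by simp
  have Apli: "Apl integrable_on {t3..T}" using integrable_continuous_interval[OF Aplc] .
  have Aplnn: "\<And>t. t \<in> {t3..T} \<Longrightarrow> 0 \<le> Apl t"
    unfolding Apl_eq using Henstock_Kurzweil_Integration.integral_nonneg[OF paisub] pann t3 by auto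
  have Ipos: "I > 0"
  proof -
    define m where "m = (t3 + T) / 2"
    have m: "t3 < m" "m < T" using t3 by (auto simp: m_def)
    have Am: "Apl m > 0" using Apos m t3 by (auto simp: Apl_def)
    have Ale: "\<And>\<xi>. \<xi> \<in> {t3..m} \<Longrightarrow> Apl m \<le> Apl \<xi>"
    proof -
      fix \<xi> assume xi: "\<xi> \<in> {t3..m}"
      show "Apl m \<le> Apl \<xi>" unfolding Apl_eq
        by (rule mono_int[OF integrable_integral[OF paisub[of \<xi> T]] integrable_integral[OF paisub[of m T]]])
           (use xi m t3 pann in auto)
    qed
    have c: "integral {t3..m} Apl + integral {m..T} Apl = I"
      unfolding I_def using Henstock_Kurzweil_Integration.integral_combine[OF _ _ Apli] m by auto
    have "0 \<le> integral {m..T} Apl"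
      using Henstock_Kurzweil_Integration.integral_nonneg[OF integrable_on_subinterval[OF Apli]] Aplnn m by auto
    moreover have "integral {t3..m} (\<lambda>_. Apl m) \<le> integral {t3..m} Apl"
      by (rule integral_le[OF _ integrable_on_subinterval[OF Apli] Ale]) (use m in auto)
    moreover have "integral {t3..m} (\<lambda>_. Apl m) = (m - t3) * Apl m" using m by simp
    moreover have "(m - t3) * Apl m > 0" using m Am by simp
    ultimately show ?thesis using c by linarith
  qed
  have GI: "G * I > 0" using Gpos Ipos by simp
  have lampos: "lam > 0"
  proof -
    have "0 < (kappaT - kappa3) / (G * I)" using kappa GI by simp
    then show ?thesis using lam unfolding G_def[symmetric] Apl_def[symmetric] I_def[symmetric] by linarith
  qed
  have lamGI: "lam * (G * I) > kappaT - kappa3"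
    using lam GI unfolding G_def[symmetric] Apl_def[symmetric] I_def[symmetric]
    by (simp add: pos_divide_less_eq mult.commute)
  have fnn: "\<And>s. 0 \<le> lam * pa s * g (x s)" using lampos pann gnn by simp
  have ynn: "\<And>t. t \<in> {tau..T} \<Longrightarrow> 0 \<le> y t"
    using has_integral_nonneg[OF fint fnn] yT by auto
  have x3: "x t3 < kappa3"
  proof (rule ccontr)
    assume H: "\<not> x t3 < kappa3"
    have xr: "x s \<in> {kappa3..kappaT}" if s: "s \<in> {t3..T}" for s
    proof -
      have "x T - x s \<le> x T - x t3"
        by (rule mono_int[OF yint yint]) (use s t3 ynn in auto)
      moreover have "0 \<le> x T - x s"
        using has_integral_nonneg[OF yint] ynn s t3 by auto
      ultimately show ?thesis using H xT by auto
    qed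
    have ylow: "lam * G * Apl t \<le> y t" if t: "t \<in> {t3..T}" for t
    proof -
      have "((\<lambda>s. lam * G * pa s) has_integral (lam * G * Apl t)) {t..T}"
        unfolding Apl_eq using has_integral_mult_right[OF integrable_integral[OF paisub[of t T]]] t t3
        by auto
      moreover have "((\<lambda>s. lam * pa s * g (x s)) has_integral y t) {t..T}"
        using fint[of t] t t3 yT by auto
      moreover have "lam * G * pa s \<le> lam * pa s * g (x s)" if "s \<in> {t..T}" for s
      proof -
        have "G \<le> g (x s)" using Gle xr that t by auto
        then have "(lam * pa s) * G \<le> (lam * pa s) * g (x s)"
          using lampos pann by (intro mult_left_mono) auto
        then show ?thesis by (simp add: algebra_simps)
      qed
      ultimately show ?thesis by (rule has_integral_le)
    qed
    have "((\<lambda>t. lam * G * Apl t) has_integral (lam * G * I)) {t3..T}"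
      unfolding I_def using has_integral_mult_right[OF integrable_integral[OF Apli]] by simp
    then have "lam * G * I \<le> x T - x t3"
      using has_integral_le[OF _ yint ylow] t3 by auto
    then show False using lamGI xT H by (simp add: mult.assoc)
  qed
  have ymono: "y s \<le> y t3" if s: "s \<in> {t3..T}" for s
  proof -
    have "y s - y T \<le> y t3 - y T"
      by (rule mono_int[OF fint fint]) (use s t3 fnn in auto)
    then show ?thesis by simp
  qed
  have "x T - x t3 \<le> Henstock_Kurzweil_Integration.content {t3..T} *\<^sub>R y t3"
    using has_integral_le[OF yint has_integral_const_real ymono] t3 by auto
  then have "kappaT - x t3 \<le> (T - t3) * y t3" using xT t3 by simp
  then have "kappaT - kappa3 < (T - t3) * y t3" using x3 by linarith
  then have "(kappaT - kappa3) / (T - t3) < y t3" using t3 by (simp add: divide_less_eq mult.commute)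
  then show ?thesis using x3 gamma3 by linarith
qed

end
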